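(* Let $P\subseteq\mathbb{R}_+$ be a set of positive inner Lebesgue measure and let $q:P\to\mathbb{R}$ be an arbitrary function. If $f:\mathbb{R}_+\to\mathbb{R}_+$ is $(p,q(p))$-Jensen convex for all $p\in P$, i.e. \[ f\big(H_p(x,y)\big)\le H_{q(p)}\big(f(x),f(y)\big)\qquad(x,y>0,\ p\in P), \] then $f$ is continuous, and $f_{p,q(p)}$ is convex on $(\mathbb{R}_+)_p$ for all $p\in P$.
   Context: $\mathbb{R}_+=]0,\infty[$. For $p\in\mathbb{R}$, $H_p(x,y)=\left(\frac{x^p+y^p}{2}\right)^{1/p}$ if $p\neq0$ and $H_0(x,y)=\sqrt{xy}$ ($x,y>0$). For $f:\mathbb{R}_+\to\mathbb{R}_+$ and $(p,q)\in\mathbb{R}^2$ with $p\neq0$, set $(\mathbb{R}_+)_p=\{t^p\mid t>0\}$ and define $f_{p,q}:(\mathbb{R}_+)_p\to\mathbb{R}$ by $f_{p,q}(x)=\operatorname{sign}(q)\big(f(x^{1/p})\big)^q$ if $q\neq0$ and $f_{p,q}(x)=\log f(x^{1/p})$ if $q=0$. *)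

theory Defs
  imports "HOL-Analysis.Analysis"
begin

definition H :: "real \<Rightarrow> real \<Rightarrow> real \<Rightarrow> real" where
  "H p x y = (if p = 0 then sqrt (x * y) else ((x powr p + y powr p) / 2) powr (1 / p))"

definition Rp :: "real \<Rightarrow> real set" where
  "Rp p = {t powr p | t. t > 0}"

definition fpq :: "(real \<Rightarrow> real) \<Rightarrow> real \<Rightarrow> real \<Rightarrow> real \<Rightarrow> real" where
  "fpq f p q x = (if q = 0 then ln (f (x powr (1 / p)))
                  else sgn q * (f (x powr (1 / p))) powr q)"

definition inner_lebesgue_measure :: "real set \<Rightarrow> ennreal" where
  "inner_lebesgue_measure P = (SUP K \<in> {K. compact K \<and> K \<subseteq> P}. emeasure lborel K)"

end

theory Submission
  imports Defs
begin

lemma cont_compact_abs_int: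
  fixes h :: "real \<Rightarrow> real"
  assumes "compact S" "continuous_on S h"
  shows "h absolutely_integrable_on S"
proof -
  have "integrable lborel (\<lambda>x. indicator S x *\<^sub>R h x)"
    by (rule borel_integrable_compact[OF assms])
  then show ?thesis
    unfolding set_integrable_def
    by (simp add: integrable_completion)
qed

lemma image_measure:
  fixes g g' :: "real \<Rightarrow> real"
  assumes S: "compact S"
    and der: "\<And>x. x \<in> S \<Longrightarrow> (g has_field_derivative g' x) (at x within S)"
    and inj: "inj_on g S"
    and cg': "continuous_on S g'"
  shows "g ` S \<in> lmeasurable \<and> measure lebesgue (g ` S) = integral S (\<lambda>x. \<bar>g' x\<bar>)"
proof -
  have Sl: "S \<in> sets lebesgue" using S lmeasurable_compact fmeasurable_def by blast
  have ai: "(\<lambda>x. \<bar>g' x\<bar> * 1) absolutely_integrable_on S"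
    using cont_compact_abs_int[OF S, of "\<lambda>x. \<bar>g' x\<bar>"] cg' by (auto intro: continuous_intros)
  have "(\<lambda>x. 1::real) absolutely_integrable_on (g ` S) \<and> integral (g ` S) (\<lambda>x. 1) = integral S (\<lambda>x. \<bar>g' x\<bar>)"
    using has_absolute_integral_change_of_variables_1'[OF Sl der inj, of "\<lambda>x. 1" "integral S (\<lambda>x. \<bar>g' x\<bar>)"] ai
    by simp
  moreover have "continuous_on S g"
    using der by (meson DERIV_continuous continuous_at_imp_continuous_on continuous_on_eq_continuous_within)
  then have "compact (g ` S)" using S compact_continuous_image by blast
  then have "g ` S \<in> lmeasurable" by (rule lmeasurable_compact)
  ultimately show ?thesis using lmeasure_integral[of "g ` S"] by auto
qed

lemma steinhaus_mid:
  fixes A :: "real set"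
  assumes A: "compact A" and r: "r > 0"
    and dens: "measure lebesgue (A \<inter> cball c r) > 3 * r / 2"
    and z: "\<bar>z - c\<bar> < r / 4"
  shows "\<exists>a\<in>A. \<exists>b\<in>A. z = (a + b) / 2"
proof (rule ccontr)
  assume nz: "\<not> ?thesis"
  define B where "B = A \<inter> cball c r"
  have Bc: "compact B" unfolding B_def using A by (simp add: compact_Int_closed)
  define R where "R = (\<lambda>x. 2 * z - x) ` B"
  have der: "((\<lambda>x. 2 * z - x) has_field_derivative (-1)) (at x within B)" for x
    by (auto intro!: derivative_eq_intros)
  have inj: "inj_on (\<lambda>x. 2 * z - x) B" by (auto simp: inj_on_def)
  have "R \<in> lmeasurable \<and> measure lebesgue R = integral B (\<lambda>x. \<bar>-1::real\<bar>)"
    unfolding R_def by (rule image_measure[OF Bc der inj]) (auto intro: continuous_intros)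
  moreover have Bl: "B \<in> lmeasurable" using Bc lmeasurable_compact by blast
  ultimately have Rl: "R \<in> lmeasurable" and mR: "measure lebesgue R = measure lebesgue B"
    using lmeasure_integral[OF Bl] by auto
  have disj: "B \<inter> R = {}"
  proof (rule ccontr)
    assume "B \<inter> R \<noteq> {}"
    then obtain a b where "a \<in> B" "b \<in> B" "a = 2 * z - b" unfolding R_def by auto
    then have "a \<in> A" "b \<in> A" "z = (a + b) / 2" unfolding B_def by auto
    then show False using nz by blast
  qed
  have mU: "measure lebesgue (B \<union> R) = measure lebesgue B + measure lebesgue R"
    using measure_Un2[OF Bl Rl] disj by (simp add: Diff_triv Int_commute)
  define \<rho> where "\<rho> = r + 2 * \<bar>z - c\<bar>"
  have sub: "B \<union> R \<subseteq> {c - \<rho> .. c + \<rho>}"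
    unfolding B_def R_def \<rho>_def by (auto simp: dist_real_def abs_if split: if_splits)
  have "measure lebesgue (B \<union> R) \<le> measure lebesgue {c - \<rho> .. c + \<rho>}"
    by (rule measure_mono_fmeasurable[OF sub]) (use Bl Rl in auto)
  also have "\<dots> = 2 * \<rho>" using r unfolding \<rho>_def by simp
  finally have "2 * measure lebesgue B \<le> 2 * \<rho>" using mU mR by simp
  moreover have "measure lebesgue B > 3 * r / 2" using dens B_def by simp
  ultimately show False using z unfolding \<rho>_def by simp
qed

lemma grid_sum:
  fixes X :: "real set" and I :: "nat \<Rightarrow> real set"
  assumes X: "X \<in> lmeasurable" and Il: "\<And>k. I k \<in> sets lebesgue"
    and dj: "\<And>k l. k \<noteq> l \<Longrightarrow> I k \<inter> I l = {}"
  shows "measure lebesgue (X \<inter> (\<Union>k<N. I k)) = (\<Sum>k<N. measure lebesgue (X \<inter> I k))"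
proof -
  have fin: "finite {..<N}" by simp
  have sets: "(\<lambda>k. X \<inter> I k) ` {..<N} \<subseteq> sets lebesgue"
    using fmeasurableD[OF X] Il by blast
  have djf: "disjoint_family_on (\<lambda>k. X \<inter> I k) {..<N}"
    unfolding disjoint_family_on_def
  proof (intro ballI impI)
    fix k l :: nat assume "k \<in> {..<N}" "l \<in> {..<N}" "k \<noteq> l"
    then have "I k \<inter> I l = {}" by (intro dj)
    then show "X \<inter> I k \<inter> (X \<inter> I l) = {}" by blast
  qed
  have fm: "emeasure lebesgue (X \<inter> I k) \<noteq> \<infinity>" if "k \<in> {..<N}" for k :: nat
  proof -
    have "X \<inter> I k \<in> lmeasurable" by (rule fmeasurable_Int_fmeasurable[OF X Il])
    then show ?thesis using fmeasurableD2 infinity_ennreal_def by metis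
  qed
  have "measure lebesgue (\<Union>k\<in>{..<N}. X \<inter> I k) = (\<Sum>k<N. measure lebesgue (X \<inter> I k))"
    by (rule measure_finite_Union[OF fin sets djf fm])
  moreover have "(\<Union>k\<in>{..<N}. X \<inter> I k) = X \<inter> (\<Union>k<N. I k)" by blast
  ultimately show ?thesis by simp
qed

lemma density_interval:
  fixes A :: "real set"
  assumes A: "compact A" and mpos: "measure lebesgue A > 0"
  shows "\<exists>c r. r > 0 \<and> measure lebesgue (A \<inter> cball c r) > 3 * r / 2"
proof (rule ccontr)
  assume "\<not> ?thesis"
  then have H: "\<And>c r. r > 0 \<Longrightarrow> measure lebesgue (A \<inter> cball c r) \<le> 3 * r / 2"
    by (meson not_less)
  define m where "m = measure lebesgue A"
  have Al: "A \<in> lmeasurable" using A lmeasurable_compact by blast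
  have m6: "m / 6 > 0" using mpos m_def by simp
  obtain T where T: "open T" "A \<subseteq> T" "T - A \<in> lmeasurable"
    and eT: "emeasure lebesgue (T - A) < ennreal (m / 6)"
    using sets_lebesgue_outer_open[OF fmeasurableD[OF Al] m6] by blast
  have "ennreal (measure lebesgue (T - A)) < ennreal (m / 6)"
    using eT emeasure_eq_measure2[OF T(3)] by simp
  then have mTA: "measure lebesgue (T - A) < m / 6"
    by (simp add: ennreal_less_iff)
  have TU: "T = A \<union> (T - A)" using T by auto
  have Tl: "T \<in> lmeasurable" using TU Al T(3) by (metis fmeasurable.Un)
  have mT: "measure lebesgue T < 7 * m / 6"
  proof -
    have "measure lebesgue T = m + measure lebesgue ((T - A) - A)"
      using measure_Un2[OF Al T(3)] TU m_def by simp
    also have "(T - A) - A = T - A" by auto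
    finally show ?thesis using mTA by simp
  qed
  obtain d where d: "d > 0" "\<And>x y. x \<in> A \<Longrightarrow> y \<in> - T \<Longrightarrow> d \<le> dist x y"
  proof -
    have "closed (- T)" using T(1) by (simp add: closed_Compl)
    moreover have "A \<inter> - T = {}" using T(2) by auto
    ultimately obtain \<delta> where "\<delta> > 0" "\<forall>x\<in>A. \<forall>y\<in>- T. \<delta> \<le> dist x y"
      using separate_compact_closed[OF A] by blast
    then show ?thesis using that by blast
  qed
  have dT: "\<And>x y. x \<in> A \<Longrightarrow> dist x y < d \<Longrightarrow> y \<in> T"
    using d by force
  obtain R where R: "\<And>x. x \<in> A \<Longrightarrow> \<bar>x\<bar> \<le> R"
    using compact_imp_bounded[OF A] bounded_real by blast
  define L where "L = d / 2"
  have L: "L > 0" "L < d" using d L_def by auto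
  define N where "N = nat \<lceil>2 * \<bar>R\<bar> / L\<rceil> + 1"
  define I where "I k = {- \<bar>R\<bar> + real k * L ..< - \<bar>R\<bar> + real (Suc k) * L}" for k
  have Il: "I k \<in> sets lebesgue" for k unfolding I_def by simp
  have dj: "I k \<inter> I l = {}" if "k \<noteq> l" for k l
  proof -
    { fix k l :: nat assume "k < l"
      then have "real (Suc k) * L \<le> real l * L" using L by (intro mult_right_mono) auto
      then have "I k \<inter> I l = {}" unfolding I_def by auto }
    then show ?thesis using that by (metis Int_commute linorder_neqE_nat)
  qed
  define U where "U = (\<Union>k<N. I k)"
  have cover: "A \<subseteq> U"
  proof
    fix x assume x: "x \<in> A"
    define y where "y = (x + \<bar>R\<bar>) / L"
    have y0: "y \<ge> 0" using R[OF x] L unfolding y_def by (simp add: abs_le_iff)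
    define k where "k = nat \<lfloor>y\<rfloor>"
    have k1: "real k \<le> y" "y < real k + 1" unfolding k_def using y0 by linarith+
    have "y \<le> 2 * \<bar>R\<bar> / L" unfolding y_def using R[OF x] L
      by (intro divide_right_mono) (auto simp: abs_le_iff)
    then have "k < N" unfolding N_def using k1 by linarith
    moreover have "x \<in> I k"
    proof -
      have "real k * L \<le> y * L" "y * L < (real k + 1) * L"
        using k1 L by (auto intro: mult_right_mono)
      moreover have "y * L = x + \<bar>R\<bar>" unfolding y_def using L by simp
      ultimately show ?thesis unfolding I_def by (auto simp: algebra_simps)
    qed
    ultimately show "x \<in> U" unfolding U_def by blast
  qed
  have trm: "measure lebesgue (A \<inter> I k) \<le> 3 / 4 * measure lebesgue (T \<inter> I k)" for k
  proof (cases "A \<inter> I k = {}")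
    case True then show ?thesis
      by (simp add: measure_nonneg)
  next
    case False
    then obtain x where x: "x \<in> A" "x \<in> I k" by blast
    have "I k \<subseteq> T"
    proof
      fix y assume "y \<in> I k"
      with x have "dist x y < L" unfolding I_def by (auto simp: dist_real_def algebra_simps)
      then show "y \<in> T" using dT[OF x(1)] L by simp
    qed
    then have TI: "T \<inter> I k = I k" by auto
    have mI: "measure lebesgue (I k) = L" unfolding I_def using L by (simp add: algebra_simps)
    define c where "c = - \<bar>R\<bar> + real k * L + L / 2"
    have "A \<inter> I k \<subseteq> A \<inter> cball c (L / 2)"
    proof
      fix x assume "x \<in> A \<inter> I k"
      then have "x \<in> A" "- \<bar>R\<bar> + real k * L \<le> x" "x < - \<bar>R\<bar> + real (Suc k) * L"
        unfolding I_def by auto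
      moreover have "real (Suc k) * L = real k * L + L" by (simp add: algebra_simps)
      ultimately have "\<bar>c - x\<bar> \<le> L / 2" unfolding c_def abs_le_iff by linarith
      then show "x \<in> A \<inter> cball c (L / 2)" using \<open>x \<in> A\<close> by (simp add: dist_real_def)
    qed
    then have "measure lebesgue (A \<inter> I k) \<le> measure lebesgue (A \<inter> cball c (L / 2))"
      by (intro measure_mono_fmeasurable) (auto intro: Al fmeasurable_Int_fmeasurable fmeasurableD Il)
    also have "\<dots> \<le> 3 * (L / 2) / 2" using H[of "L / 2" c] L by simp
    finally show ?thesis using TI mI by simp
  qed
  have "m = measure lebesgue (A \<inter> U)" using cover m_def by (simp add: Int_absorb2)
  also have "\<dots> = (\<Sum>k<N. measure lebesgue (A \<inter> I k))"
    unfolding U_def by (rule grid_sum[OF Al Il dj])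
  also have "\<dots> \<le> (\<Sum>k<N. 3 / 4 * measure lebesgue (T \<inter> I k))"
    by (rule sum_mono) (rule trm)
  also have "\<dots> = 3 / 4 * measure lebesgue (T \<inter> U)"
    unfolding U_def by (simp add: grid_sum[OF Tl Il dj] sum_distrib_left)
  also have "U \<in> sets lebesgue" unfolding U_def using Il by auto
  then have "T \<inter> U \<in> sets lebesgue" using fmeasurableD[OF Tl] by auto
  then have "3 / 4 * measure lebesgue (T \<inter> U) \<le> 3 / 4 * measure lebesgue T"
    by (intro mult_left_mono measure_mono_fmeasurable) (auto intro: Tl fmeasurableD fmeasurable_Int_fmeasurable simp: U_def Il)
  finally have "m \<le> 3 / 4 * measure lebesgue T" .
  with mT mpos m_def show False by simp
qed


lemma dyadic_step:
  fixes g :: "real \<Rightarrow> real"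
  assumes mid: "\<And>u v. u > 0 \<Longrightarrow> v > 0 \<Longrightarrow> g ((u + v) / 2) \<le> (g u + g v) / 2"
    and a: "a > 0" and w: "w > 0"
  shows "(1 - (1/2)^n) * a + (1/2)^n * w > 0 \<and>
         g ((1 - (1/2)^n) * a + (1/2)^n * w) \<le> (1 - (1/2)^n) * g a + (1/2)^n * g w"
proof (induction n)
  case 0
  then show ?case using w by simp
next
  case (Suc n)
  define t :: real where "t = (1/2)^n"
  have t: "0 < t" "t \<le> 1" unfolding t_def by (auto simp: power_le_one)
  define x where "x = (1 - t) * a + t * w"
  have x: "x > 0" "g x \<le> (1 - t) * g a + t * g w" using Suc unfolding x_def t_def by auto
  have eq: "(1 - (1/2)^Suc n) * a + (1/2)^Suc n * w = (a + x) / 2"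
    unfolding x_def t_def by (simp add: field_simps)
  have "g ((a + x) / 2) \<le> (g a + g x) / 2" using mid[OF a x(1)] .
  also have "\<dots> \<le> (1 - (1/2)^Suc n) * g a + (1/2)^Suc n * g w"
    using x(2) unfolding t_def by (simp add: field_simps)
  finally have fin: "g ((a + x) / 2) \<le> (1 - (1/2)^Suc n) * g a + (1/2)^Suc n * g w" .
  have pos: "(a + x) / 2 > 0" using a x by simp
  show ?case unfolding eq using pos fin by blast
qed

lemma local_bound_cont:
  fixes g :: "real \<Rightarrow> real"
  assumes mid: "\<And>u v. u > 0 \<Longrightarrow> v > 0 \<Longrightarrow> g ((u + v) / 2) \<le> (g u + g v) / 2"
    and z: "z > 0" and \<rho>: "\<rho> > 0"
    and bd: "\<And>y. \<bar>y - z\<bar> < \<rho> \<Longrightarrow> y > 0 \<and> g y \<le> M"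
  shows "isCont g z"
  unfolding continuous_at_eps_delta
proof (intro allI impI)
  fix e :: real assume e: "e > 0"
  define D where "D = M - g z"
  have D: "D \<ge> 0" using bd[of z] \<rho> D_def by simp
  obtain n where n: "(1/2::real)^n < e / (D + 1)"
    using real_arch_pow_inv[of "e / (D + 1)" "1/2"] e D by auto
  define t :: real where "t = (1/2)^n"
  have t: "t > 0" "t \<le> 1" unfolding t_def by (auto simp: power_le_one)
  have tD: "t * D < e"
  proof -
    have "t * D \<le> t * (D + 1)" using t by simp
    also have "\<dots> < e" using n t D unfolding t_def by (simp add: field_simps)
    finally show ?thesis .
  qed
  have up: "g (z + h) \<le> g z + t * D" if h: "\<bar>h\<bar> < t * \<rho>" for h
  proof -
    define s where "s = h / t"
    have s: "\<bar>s\<bar> < \<rho>" unfolding s_def using h t by (simp add: abs_divide field_simps)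
    have zs: "z + s > 0" "g (z + s) \<le> M" using bd[of "z + s"] s by auto
    have "(1 - t) * z + t * (z + s) = z + h" unfolding s_def using t by (simp add: field_simps)
    then have "g (z + h) \<le> (1 - t) * g z + t * g (z + s)"
      using dyadic_step[OF mid z zs(1), of n] unfolding t_def by simp
    also have "\<dots> \<le> (1 - t) * g z + t * M" using zs t by simp
    finally show ?thesis unfolding D_def by (simp add: algebra_simps)
  qed
  show "\<exists>d>0. \<forall>x'. dist x' z < d \<longrightarrow> dist (g x') (g z) < e"
  proof (intro exI conjI allI impI)
    show "t * \<rho> > 0" using t \<rho> by simp
    fix x' assume "dist x' z < t * \<rho>"
    then have h: "\<bar>x' - z\<bar> < t * \<rho>" by (simp add: dist_real_def)
    have "t * \<rho> \<le> \<rho>" using t \<rho> by simp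
    then have p1: "x' > 0" and p2: "2 * z - x' > 0" using bd[of x'] bd[of "2 * z - x'"] h by auto
    have u1: "g x' \<le> g z + t * D" using up[of "x' - z"] h by simp
    have u2: "g (2 * z - x') \<le> g z + t * D" using up[of "z - x'"] h by simp
    have "g ((x' + (2 * z - x')) / 2) \<le> (g x' + g (2 * z - x')) / 2" using mid[OF p1 p2] .
    then have "g z \<le> (g x' + g (2 * z - x')) / 2" by simp
    then have "g x' \<ge> g z - t * D" using u2 by simp
    then have "\<bar>g x' - g z\<bar> \<le> t * D" using u1 by simp
    then show "dist (g x') (g z) < e" using tD by (simp add: dist_real_def)
  qed
qed

lemma bernstein_doetsch:
  fixes g :: "real \<Rightarrow> real"
  assumes mid: "\<And>u v. u > 0 \<Longrightarrow> v > 0 \<Longrightarrow> g ((u + v) / 2) \<le> (g u + g v) / 2"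
    and \<delta>: "\<delta> > 0" and bd: "\<And>y. \<bar>y - c\<bar> < \<delta> \<Longrightarrow> y > 0 \<and> g y \<le> M"
  shows "continuous_on {0<..} g"
proof -
  have c: "c > 0" using bd[of c] \<delta> by simp
  have "isCont g z" if z: "z > 0" for z
  proof -
    obtain n where n: "(1/2::real)^n < min (z / c) (1/2)"
      using real_arch_pow_inv[of "min (z / c) (1/2)" "1/2"] z c by auto
    define t :: real where "t = (1/2)^n"
    have t: "t > 0" "t < 1" "t * c < z" using n c unfolding t_def by (auto simp: field_simps)
    define a where "a = (z - t * c) / (1 - t)"
    have a: "a > 0" unfolding a_def using t by simp
    define \<rho> where "\<rho> = min (t * \<delta>) z"
    have \<rho>: "\<rho> > 0" unfolding \<rho>_def using t \<delta> z by simp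
    show ?thesis
    proof (rule local_bound_cont[OF mid z \<rho>])
      fix y assume y: "\<bar>y - z\<bar> < \<rho>"
      define w where "w = c + (y - z) / t"
      have "\<bar>w - c\<bar> < \<delta>" unfolding w_def using y t unfolding \<rho>_def
        by (simp add: abs_divide field_simps)
      then have w: "w > 0" "g w \<le> M" using bd by auto
      have eq: "(1 - t) * a + t * w = y" unfolding a_def w_def using t by (simp add: field_simps)
      have "g y \<le> (1 - t) * g a + t * g w"
        using dyadic_step[OF mid a w(1), of n] eq unfolding t_def by simp
      also have "\<dots> \<le> (1 - t) * g a + t * M" using w t by simp
      finally show "y > 0 \<and> g y \<le> (1 - t) * g a + t * M"
        using y unfolding \<rho>_def by (simp add: abs_less_iff)
    qed
  qed
  then show ?thesis by (intro continuous_at_imp_continuous_on) auto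
qed


lemma midconv_cont_convex:
  fixes g :: "real \<Rightarrow> real"
  assumes mid: "\<And>u v. u > 0 \<Longrightarrow> v > 0 \<Longrightarrow> g ((u + v) / 2) \<le> (g u + g v) / 2"
    and cont: "continuous_on {0<..} g"
  shows "convex_on {0<..} g"
proof -
  have main: "g ((1 - t) * x + t * y) \<le> (1 - t) * g x + t * g y"
    if x: "x > 0" and y: "y > 0" and t: "0 \<le> t" "t \<le> 1" for x y t
  proof (rule ccontr)
    assume neg: "\<not> ?thesis"
    define p where "p s = (1 - s) * x + s * y" for s
    define h where "h s = g (p s) - ((1 - s) * g x + s * g y)" for s
    have ppos: "p s > 0" if "0 \<le> s" "s \<le> 1" for s
    proof -
      have "(1 - s) * min x y + s * min x y \<le> p s"
        unfolding p_def using that by (intro add_mono mult_left_mono) auto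
      then show ?thesis using x y by (simp add: algebra_simps)
    qed
    have cp: "continuous_on {0..1} p" unfolding p_def by (intro continuous_intros)
    have "continuous_on {0..1} (\<lambda>s. g (p s))"
      by (rule continuous_on_compose2[OF cont cp]) (use ppos in auto)
    then have ch: "continuous_on {0..1} h" unfolding h_def by (intro continuous_intros)
    obtain t0 where t0: "t0 \<in> {0..1}" "\<And>s. s \<in> {0..1} \<Longrightarrow> h s \<le> h t0"
      using continuous_attains_sup[OF compact_Icc _ ch] by auto
    define m where "m = h t0"
    have "h t > 0" using neg unfolding h_def p_def by simp
    then have mpos: "m > 0" using t0(2)[of t] t unfolding m_def by simp
    define S where "S = {s \<in> {0..1}. h s = m}"
    have Sc: "closed S" unfolding S_def by (rule continuous_closed_preimage_constant[OF ch closed_atLeastAtMost])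
    have Sne: "S \<noteq> {}" unfolding S_def m_def using t0 by auto
    have Sb: "bdd_below S" unfolding S_def by (rule bdd_belowI[of _ 0]) auto
    define t1 where "t1 = Inf S"
    have t1S: "t1 \<in> S" unfolding t1_def by (rule closed_contains_Inf[OF Sne Sb Sc])
    have h0: "h 0 = 0" "h 1 = 0" unfolding h_def p_def by simp_all
    have t1: "0 < t1" "t1 < 1" "h t1 = m"
      using t1S h0 mpos unfolding S_def by (auto simp: order_le_less)
    define d where "d = min t1 (1 - t1)"
    have d: "d > 0" "0 \<le> t1 - d" "t1 + d \<le> 1" using t1 unfolding d_def by auto
    have hl: "h (t1 - d) < m"
    proof -
      have le: "h (t1 - d) \<le> m" using t0(2)[of "t1 - d"] d unfolding m_def by simp
      have "h (t1 - d) \<noteq> m"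
      proof
        assume "h (t1 - d) = m"
        then have "t1 - d \<in> S" unfolding S_def using d by simp
        then have "t1 \<le> t1 - d" unfolding t1_def by (rule cInf_lower[OF _ Sb])
        then show False using d by simp
      qed
      then show ?thesis using le by simp
    qed
    have hr: "h (t1 + d) \<le> m" using t0(2)[of "t1 + d"] d unfolding m_def by simp
    have pp: "p t1 = (p (t1 - d) + p (t1 + d)) / 2" unfolding p_def by (simp add: field_simps)
    have "g (p t1) \<le> (g (p (t1 - d)) + g (p (t1 + d))) / 2"
      unfolding pp by (rule mid) (use ppos d in auto)
    then have "h t1 \<le> (h (t1 - d) + h (t1 + d)) / 2" unfolding h_def by (simp add: field_simps)
    then show False using hl hr t1 by simp
  qed
  show ?thesis unfolding convex_on_def
  proof (intro conjI ballI allI impI)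
    show "convex {0::real<..}" by (simp add: convex_real_interval)
    fix x y u v :: real assume xy: "x \<in> {0<..}" "y \<in> {0<..}" "u \<ge> 0" "v \<ge> 0" "u + v = 1"
    then have u: "u = 1 - v" by simp
    show "g (u *\<^sub>R x + v *\<^sub>R y) \<le> u * g x + v * g y"
      unfolding u using main[of x y v] xy by simp
  qed
qed


lemma H_le_max:
  assumes a: "a > 0" and b: "b > 0"
  shows "H q a b \<le> max a b"
proof -
  define M where "M = max a b"
  have M: "M > 0" "a \<le> M" "b \<le> M" using a b M_def by auto
  consider "q = 0" | "q > 0" | "q < 0" by linarith
  then show ?thesis
  proof cases
    case 1
    have "a * b \<le> M * M" using M a b by (intro mult_mono) auto
    then have "sqrt (a * b) \<le> sqrt (M * M)" by (rule real_sqrt_le_mono)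
    also have "\<dots> = M" using M by simp
    finally show ?thesis using 1 M unfolding H_def M_def[symmetric] by simp
  next
    case 2
    have "a powr q \<le> M powr q" "b powr q \<le> M powr q"
      using M a b 2 by (auto intro: powr_mono2)
    then have "(a powr q + b powr q) / 2 \<le> M powr q" by simp
    then have "((a powr q + b powr q) / 2) powr (1 / q) \<le> (M powr q) powr (1 / q)"
      using 2 a b by (intro powr_mono2) (auto intro: add_nonneg_nonneg)
    also have "\<dots> = M" using 2 M by (simp add: powr_powr)
    finally show ?thesis using 2 unfolding H_def M_def[symmetric] by simp
  next
    case 3
    have "M powr q \<le> a powr q" "M powr q \<le> b powr q"
      using M a b 3 by (auto intro: powr_mono2')
    then have le: "M powr q \<le> (a powr q + b powr q) / 2" by simp
    have "((a powr q + b powr q) / 2) powr (1 / q) \<le> (M powr q) powr (1 / q)"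
      using 3 M le by (intro powr_mono2') auto
    also have "\<dots> = M" using 3 M by (simp add: powr_powr)
    finally show ?thesis using 3 unfolding H_def M_def[symmetric] by simp
  qed
qed

definition Phi :: "real \<Rightarrow> real \<Rightarrow> real" where
  "Phi q t = (if q = 0 then ln t else sgn q * t powr q)"

lemma fpq_Phi: "fpq f p q u = Phi q (f (u powr (1 / p)))"
  unfolding fpq_def Phi_def by simp

lemma Phi_mono:
  assumes "0 < s" "s \<le> t"
  shows "Phi q s \<le> Phi q t"
proof -
  consider "q = 0" | "q > 0" | "q < 0" by linarith
  then show ?thesis
  proof cases
    case 1 then show ?thesis using assms unfolding Phi_def by simp
  next
    case 2 then show ?thesis using assms unfolding Phi_def by (simp add: powr_mono2)
  next
    case 3 then show ?thesis using assms unfolding Phi_def by (simp add: powr_mono2')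
  qed
qed

lemma H_pos: assumes "a > 0" "b > 0" shows "H q a b > 0"
proof -
  have "a powr q + b powr q > 0" using assms by (intro add_pos_pos) auto
  then show ?thesis using assms unfolding H_def by auto
qed

lemma Phi_H:
  assumes a: "a > 0" and b: "b > 0"
  shows "Phi q (H q a b) = (Phi q a + Phi q b) / 2"
proof (cases "q = 0")
  case True
  then show ?thesis using a b unfolding Phi_def H_def by (simp add: ln_sqrt ln_mult)
next
  case False
  have pos: "(a powr q + b powr q) / 2 > 0" using a b by (intro divide_pos_pos add_pos_pos) auto
  have "(((a powr q + b powr q) / 2) powr (1 / q)) powr q = (a powr q + b powr q) / 2"
    using False pos by (simp add: powr_powr)
  then show ?thesis using False unfolding Phi_def H_def by (simp add: field_simps)
qed

lemma Phi_cont: "continuous_on {0<..} (Phi q)"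
  unfolding Phi_def
  by (cases "q = 0") (auto intro!: continuous_intros)

lemma Phi_inv:
  assumes t: "t > 0"
  shows "t = (if q = 0 then exp (Phi q t) else (sgn q * Phi q t) powr (1 / q))"
    and "q \<noteq> 0 \<Longrightarrow> sgn q * Phi q t > 0"
proof -
  show "t = (if q = 0 then exp (Phi q t) else (sgn q * Phi q t) powr (1 / q))"
  proof (cases "q = 0")
    case True then show ?thesis using t unfolding Phi_def by simp
  next
    case False
    have "sgn q * sgn q = 1" using False by (simp add: sgn_if)
    then have "sgn q * Phi q t = t powr q" using False unfolding Phi_def by (simp add: mult.assoc[symmetric])
    then show ?thesis using False t by (simp add: powr_powr)
  qed
  show "q \<noteq> 0 \<Longrightarrow> sgn q * Phi q t > 0"
  proof -
    assume q: "q \<noteq> 0"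
    have "sgn q * sgn q = 1" using q by (simp add: sgn_if)
    then have "sgn q * Phi q t = t powr q" using q unfolding Phi_def by (simp add: mult.assoc[symmetric])
    then show ?thesis using t by simp
  qed
qed

lemma midconv_fpq:
  assumes p: "p > 0"
    and jen: "\<And>x y. x > 0 \<Longrightarrow> y > 0 \<Longrightarrow> f (H p x y) \<le> H q (f x) (f y)"
    and fpos: "\<And>x. x > 0 \<Longrightarrow> f x > 0"
    and u: "u > 0" and v: "v > 0"
  shows "fpq f p q ((u + v) / 2) \<le> (fpq f p q u + fpq f p q v) / 2"
proof -
  define x where "x = u powr (1 / p)"
  define y where "y = v powr (1 / p)"
  have xy: "x > 0" "y > 0" using u v unfolding x_def y_def by auto
  have "x powr p = u" "y powr p = v" using u v p unfolding x_def y_def by (simp_all add: powr_powr)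
  then have Hxy: "H p x y = ((u + v) / 2) powr (1 / p)" using p unfolding H_def by simp
  have "f (H p x y) \<le> H q (f x) (f y)" by (rule jen[OF xy])
  then have "Phi q (f (H p x y)) \<le> Phi q (H q (f x) (f y))"
    by (intro Phi_mono) (use fpos xy H_pos in auto)
  also have "\<dots> = (Phi q (f x) + Phi q (f y)) / 2" by (rule Phi_H) (use fpos xy in auto)
  finally show ?thesis unfolding fpq_Phi using Hxy unfolding x_def y_def by simp
qed

lemma Rp_pos: "p > 0 \<Longrightarrow> Rp p = {0<..}"
  unfolding Rp_def
proof (auto)
  fix u :: real assume p: "p > 0" and u: "u > 0"
  show "\<exists>t. u = t powr p \<and> 0 < t"
    by (rule exI[of _ "u powr (1 / p)"]) (use p u in \<open>simp add: powr_powr\<close>)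
qed


lemma key_ineq:
  fixes s :: real
  assumes s: "s > 1"
  shows "(1 + s) * ln ((1 + s) / 2) < s * ln s"
proof -
  define k where "k x = x * ln x - (1 + x) * ln ((1 + x) / 2)" for x :: real
  have "k 1 < k s"
  proof (rule DERIV_pos_imp_increasing_open[OF s])
    fix x :: real assume x: "1 < x" "x < s"
    have "(k has_real_derivative (ln x - ln ((1 + x) / 2))) (at x)"
      unfolding k_def using x
      apply (auto intro!: derivative_eq_intros)
      done
    moreover have "ln ((1 + x) / 2) < ln x" using x by simp
    ultimately show "\<exists>y. (k has_real_derivative y) (at x) \<and> 0 < y" by auto
  next
    show "continuous_on {1..s} k" unfolding k_def
      by (intro continuous_intros) auto
  qed
  moreover have "k 1 = 0" unfolding k_def by simp
  ultimately show ?thesis unfolding k_def by simp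
qed

definition wfun :: "real \<Rightarrow> real" where "wfun p = (1 + exp (p * ln 2)) / 2"
definition psi :: "real \<Rightarrow> real \<Rightarrow> real" where "psi p0 p = exp (p0 * (ln (wfun p) / p))"
definition kd :: "real \<Rightarrow> real" where
  "kd p = (inverse (wfun p) * (exp (p * ln 2) * ln 2 / 2) * p - ln (wfun p) * 1) / (p * p)"
definition dpsi :: "real \<Rightarrow> real \<Rightarrow> real" where
  "dpsi p0 p = exp (p0 * (ln (wfun p) / p)) * (p0 * kd p)"

lemma wfun_pos: "wfun p > 0" unfolding wfun_def by (simp add: add_pos_pos)
lemma wfun_nz: "wfun p \<noteq> 0" using wfun_pos[of p] by linarith

lemma psi_deriv: assumes p: "p \<noteq> 0" shows "(psi p0 has_real_derivative dpsi p0 p) (at p)"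
proof -
  have dw: "(wfun has_real_derivative exp (p * ln 2) * ln 2 / 2) (at p)"
    unfolding wfun_def by (auto intro!: derivative_eq_intros)
  have dl: "((\<lambda>p. ln (wfun p)) has_real_derivative inverse (wfun p) * (exp (p * ln 2) * ln 2 / 2)) (at p)"
    by (rule DERIV_chain2[OF DERIV_ln[OF wfun_pos] dw])
  have dk: "((\<lambda>p. ln (wfun p) / p) has_real_derivative kd p) (at p)"
    unfolding kd_def using DERIV_divide[OF dl DERIV_ident p] by simp
  show ?thesis unfolding psi_def dpsi_def
    by (rule DERIV_fun_exp[OF DERIV_cmult[OF dk]])
qed

lemma dpsi_pos: assumes p: "p > 0" and p0: "p0 > 0" shows "dpsi p0 p > 0"
proof -
  define s where "s = exp (p * ln 2)"
  have s: "s > 1" unfolding s_def using p by simp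
  have ls: "ln s = p * ln 2" unfolding s_def by simp
  have "(1 + s) * ln ((1 + s) / 2) < s * ln s" by (rule key_ineq[OF s])
  then have lt: "ln ((1 + s) / 2) < s * ln s / (1 + s)" using s by (simp add: field_simps)
  have "inverse ((1 + s) / 2) * (s * ln 2 / 2) * p = s * (p * ln 2) / (1 + s)"
    using s by (simp add: field_simps)
  then have "inverse ((1 + s) / 2) * (s * ln 2 / 2) * p = s * ln s / (1 + s)"
    using ls by simp
  then have "inverse (wfun p) * (exp (p * ln 2) * ln 2 / 2) * p - ln (wfun p) * 1 > 0"
    using lt unfolding wfun_def s_def[symmetric] by simp
  then have "kd p > 0" unfolding kd_def using p by simp
  then show ?thesis unfolding dpsi_def using p0 by simp
qed

lemma dpsi_cont: "continuous_on {0<..} (dpsi p0)"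
proof -
  have cw: "continuous_on {0<..} wfun" unfolding wfun_def by (intro continuous_intros) auto
  have wp: "\<forall>x\<in>{0<..}. wfun x > 0" using wfun_pos by blast
  have wn: "\<forall>x\<in>{0<..}. wfun x \<noteq> 0" using wfun_pos by (metis less_irrefl)
  have pn: "\<forall>x\<in>{0::real<..}. x * x \<noteq> 0" "\<forall>x\<in>{0::real<..}. x \<noteq> 0" by auto
  show ?thesis unfolding dpsi_def kd_def
    by (intro continuous_intros cw) (auto simp: wfun_nz)
qed

lemma psi_mono: assumes "0 < a" "a < b" "p0 > 0" shows "psi p0 a < psi p0 b"
proof (rule DERIV_pos_imp_increasing[OF assms(2)])
  fix x assume "a \<le> x" "x \<le> b"
  then have x: "x > 0" using assms by simp
  show "\<exists>y. (psi p0 has_real_derivative y) (at x) \<and> 0 < y"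
    using psi_deriv[of x p0] dpsi_pos[OF x assms(3)] x by auto
qed


lemma psi_H:
  assumes p: "p > 0"
  shows "psi p0 p = (H p 1 2) powr p0"
proof -
  have "H p 1 2 = (wfun p) powr (1 / p)"
    using p unfolding H_def wfun_def by (simp add: powr_def)
  then have "(H p 1 2) powr p0 = exp ((1 / p * p0) * ln (wfun p))"
    using wfun_pos[of p] by (simp add: powr_powr powr_def)
  also have "\<dots> = psi p0 p" unfolding psi_def by (simp add: field_simps)
  finally show ?thesis by simp
qed

lemma Phi_inv0: "t > 0 \<Longrightarrow> exp (Phi 0 t) = t"
  unfolding Phi_def by simp

lemma Phi_inv1: assumes "t > 0" "q \<noteq> 0" shows "(sgn q * Phi q t) powr (1 / q) = t"
proof -
  have "sgn q * sgn q = 1" using assms by (simp add: sgn_if)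
  then have "sgn q * Phi q t = t powr q" using assms unfolding Phi_def by (simp add: mult.assoc[symmetric])
  then show ?thesis using assms by (simp add: powr_powr)
qed

lemma Phi_pos1: assumes "t > 0" "q \<noteq> 0" shows "sgn q * Phi q t > 0"
proof -
  have "sgn q * sgn q = 1" using assms by (simp add: sgn_if)
  then have "sgn q * Phi q t = t powr q" using assms unfolding Phi_def by (simp add: mult.assoc[symmetric])
  then show ?thesis using assms by simp
qed

theorem theorem6:
  fixes P :: "real set" and q :: "real \<Rightarrow> real" and f :: "real \<Rightarrow> real"
  assumes P_pos: "P \<subseteq> {0<..}"
    and P_meas: "inner_lebesgue_measure P > 0"
    and f_pos: "\<And>x. x > 0 \<Longrightarrow> f x > 0"
    and jensen: "\<And>p x y. p \<in> P \<Longrightarrow> x > 0 \<Longrightarrow> y > 0 \<Longrightarrow>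
                   f (H p x y) \<le> H (q p) (f x) (f y)"
  shows "continuous_on {0<..} f \<and> (\<forall>p \<in> P. convex_on (Rp p) (fpq f p (q p)))"
proof -
  have "0 < (SUP K \<in> {K. compact K \<and> K \<subseteq> P}. emeasure lborel K)"
    using P_meas unfolding inner_lebesgue_measure_def .
  then obtain K where K: "compact K" "K \<subseteq> P" "0 < emeasure lborel K"
    by (auto simp: less_SUP_iff)
  have Kl: "K \<in> lmeasurable" by (rule lmeasurable_compact[OF K(1)])
  have "emeasure lebesgue K = emeasure lborel K"
    using K(1) by (simp add: borel_compact emeasure_completion main_part_sets)
  then have "ennreal (measure lebesgue K) > 0"
    using K(3) emeasure_eq_measure2[OF Kl] by simp
  then have mK: "measure lebesgue K > 0" by (simp add: ennreal_less_zero_iff)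
  then have Kne: "K \<noteq> {}" by auto
  have Kpos: "\<And>p. p \<in> K \<Longrightarrow> p > 0" using K(2) P_pos by auto
  obtain p0 where p0K: "p0 \<in> K" using Kne by blast
  have p0: "p0 > 0" using Kpos[OF p0K] .
  define A where "A = psi p0 ` K"
  have der: "\<And>x. x \<in> K \<Longrightarrow> (psi p0 has_field_derivative dpsi p0 x) (at x within K)"
  proof -
    fix x assume "x \<in> K"
    then have "x \<noteq> 0" using Kpos by force
    then show "(psi p0 has_field_derivative dpsi p0 x) (at x within K)"
      by (rule has_field_derivative_at_within[OF psi_deriv])
  qed
  have inj: "inj_on (psi p0) K"
  proof (rule inj_onI)
    fix x y assume xy: "x \<in> K" "y \<in> K" "psi p0 x = psi p0 y"
    show "x = y"
    proof (rule ccontr)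
      assume "x \<noteq> y"
      then consider "x < y" | "y < x" by linarith
      then show False using psi_mono[of x y p0] psi_mono[of y x p0] Kpos xy p0 by cases auto
    qed
  qed
  have cdK: "continuous_on K (dpsi p0)"
    by (rule continuous_on_subset[OF dpsi_cont]) (use Kpos in auto)
  have imA: "A \<in> lmeasurable \<and> measure lebesgue A = integral K (\<lambda>x. \<bar>dpsi p0 x\<bar>)"
    unfolding A_def by (rule image_measure[OF K(1) der inj cdK])
  obtain xm where xm: "xm \<in> K" "\<And>y. y \<in> K \<Longrightarrow> dpsi p0 xm \<le> dpsi p0 y"
    using continuous_attains_inf[OF K(1) Kne cdK] by blast
  define c0 where "c0 = dpsi p0 xm"
  have c0: "c0 > 0" unfolding c0_def by (rule dpsi_pos[OF Kpos[OF xm(1)] p0])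
  have "continuous_on K (\<lambda>x. \<bar>dpsi p0 x\<bar>)" using cdK by (intro continuous_on_rabs)
  then have "(\<lambda>x. \<bar>dpsi p0 x\<bar>) absolutely_integrable_on K" by (rule cont_compact_abs_int[OF K(1)])
  then have int1: "(\<lambda>x. \<bar>dpsi p0 x\<bar>) integrable_on K"
    by (rule set_lebesgue_integral_eq_integral(1))
  have "(\<lambda>x. 1::real) integrable_on K" using Kl lmeasurable_iff_integrable_on by blast
  from integrable_cmul[OF this, of c0] have int2: "(\<lambda>x. c0 * 1) integrable_on K" by simp
  have "c0 * measure lebesgue K = integral K (\<lambda>x. c0 * 1)"
    using lmeasure_integral[OF Kl] by (simp only: integral_mult_right)
  also have "\<dots> \<le> integral K (\<lambda>x. \<bar>dpsi p0 x\<bar>)"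
  proof (rule integral_le[OF int2 int1])
    fix x assume "x \<in> K"
    then have "c0 \<le> dpsi p0 x" using xm(2) unfolding c0_def by blast
    then show "c0 * 1 \<le> \<bar>dpsi p0 x\<bar>" by simp
  qed
  finally have le: "c0 * measure lebesgue K \<le> measure lebesgue A" using imA by simp
  have "0 < c0 * measure lebesgue K" using c0 mK by simp
  then have mA: "measure lebesgue A > 0" using le by linarith
  have cpsi: "continuous_on K (psi p0)"
    using der by (meson DERIV_continuous continuous_on_eq_continuous_within)
  have Ac: "compact A" unfolding A_def by (rule compact_continuous_image[OF cpsi K(1)])
  obtain c r where r: "r > 0" "measure lebesgue (A \<inter> cball c r) > 3 * r / 2"
    using density_interval[OF Ac mA] by blast
  define q0 where "q0 = q p0"
  define g0 where "g0 = fpq f p0 q0"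
  have mid0: "\<And>u v. u > 0 \<Longrightarrow> v > 0 \<Longrightarrow> g0 ((u + v) / 2) \<le> (g0 u + g0 v) / 2"
    unfolding g0_def q0_def
    by (rule midconv_fpq[OF p0]) (use jensen K(2) p0K f_pos in auto)
  define M where "M = Phi q0 (max (f 1) (f 2))"
  have bA: "a > 0 \<and> g0 a \<le> M" if a: "a \<in> A" for a
  proof -
    obtain p where p: "p \<in> K" "a = psi p0 p" using a unfolding A_def by blast
    have pp: "p > 0" using Kpos[OF p(1)] .
    have Hp: "H p 1 2 > 0" by (rule H_pos) auto
    have aH: "a = (H p 1 2) powr p0" using psi_H[OF pp] p by simp
    have apos: "a > 0" using aH Hp by simp
    have "a powr (1 / p0) = H p 1 2" using aH Hp p0 by (simp add: powr_powr)
    then have ga: "g0 a = Phi q0 (f (H p 1 2))" unfolding g0_def fpq_Phi by simp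
    have "f (H p 1 2) \<le> H (q p) (f 1) (f 2)" using jensen K(2) p(1) by auto
    also have "\<dots> \<le> max (f 1) (f 2)" by (rule H_le_max) (use f_pos in auto)
    finally have "Phi q0 (f (H p 1 2)) \<le> M" unfolding M_def
      by (intro Phi_mono) (use f_pos Hp in auto)
    then show ?thesis using ga apos by simp
  qed
  have bd: "z > 0 \<and> g0 z \<le> M" if z: "\<bar>z - c\<bar> < r / 4" for z
  proof -
    obtain a b where ab: "a \<in> A" "b \<in> A" "z = (a + b) / 2"
      using steinhaus_mid[OF Ac r(1) r(2) z] by blast
    have "g0 ((a + b) / 2) \<le> (g0 a + g0 b) / 2" using bA ab mid0 by blast
    then show ?thesis using bA[OF ab(1)] bA[OF ab(2)] by (simp add: ab(3))
  qed
  have g0c: "continuous_on {0<..} g0"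
  proof (rule bernstein_doetsch[OF mid0 _ bd])
    show "0 < r / 4" using \<open>r > 0\<close> by simp
  qed
  have gt: "g0 (t powr p0) = Phi q0 (f t)" if t: "t > 0" for t
    unfolding g0_def fpq_Phi using t p0 by (simp add: powr_powr)
  have cpw: "continuous_on {0<..} (\<lambda>t::real. t powr p0)"
    by (rule continuous_on_powr[OF continuous_on_id continuous_on_const]) auto
  have cG: "continuous_on {0<..} (\<lambda>t. g0 (t powr p0))"
    by (rule continuous_on_compose2[OF g0c cpw]) auto
  have fcont: "continuous_on {0<..} f"
  proof (cases "q0 = 0")
    case True
    have c: "continuous_on {0<..} (\<lambda>t. exp (g0 (t powr p0)))" using cG by (intro continuous_intros)
    have eq: "\<And>t. t \<in> {0<..} \<Longrightarrow> exp (g0 (t powr p0)) = f t"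
    proof -
      fix t :: real assume t: "t \<in> {0<..}"
      have "exp (Phi 0 (f t)) = f t" using t f_pos by (simp add: Phi_inv0)
      then show "exp (g0 (t powr p0)) = f t" using gt t True by simp
    qed
    show ?thesis by (rule continuous_on_eq[OF c eq])
  next
    case False
    have pos: "\<And>t. t \<in> {0<..} \<Longrightarrow> sgn q0 * g0 (t powr p0) > 0"
    proof -
      fix t :: real assume t: "t \<in> {0<..}"
      then have "sgn q0 * Phi q0 (f t) > 0" using Phi_pos1[of "f t" q0] f_pos False by simp
      then show "sgn q0 * g0 (t powr p0) > 0" using gt t by simp
    qed
    have c: "continuous_on {0<..} (\<lambda>t. (sgn q0 * g0 (t powr p0)) powr (1 / q0))"
    proof (rule continuous_on_powr)
      show "continuous_on {0<..} (\<lambda>t. sgn q0 * g0 (t powr p0))"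
        using cG by (rule continuous_on_mult_left)
      show "\<forall>t\<in>{0<..}. sgn q0 * g0 (t powr p0) \<noteq> 0" using pos by force
    qed simp
    have eq: "\<And>t. t \<in> {0<..} \<Longrightarrow> (sgn q0 * g0 (t powr p0)) powr (1 / q0) = f t"
    proof -
      fix t :: real assume t: "t \<in> {0<..}"
      then have "(sgn q0 * Phi q0 (f t)) powr (1 / q0) = f t"
        using Phi_inv1[of "f t" q0] f_pos False by simp
      then show "(sgn q0 * g0 (t powr p0)) powr (1 / q0) = f t" using gt t by simp
    qed
    show ?thesis by (rule continuous_on_eq[OF c eq])
  qed
  have conv: "convex_on (Rp p) (fpq f p (q p))" if pP: "p \<in> P" for p
  proof -
    have pp: "p > 0" using pP P_pos by auto
    have mid: "\<And>u v. u > 0 \<Longrightarrow> v > 0 \<Longrightarrow> fpq f p (q p) ((u + v) / 2) \<le> (fpq f p (q p) u + fpq f p (q p) v) / 2"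
      by (rule midconv_fpq[OF pp]) (use jensen pP f_pos in auto)
    have cpw1: "continuous_on {0<..} (\<lambda>t::real. t powr (1 / p))"
      by (rule continuous_on_powr[OF continuous_on_id continuous_on_const]) auto
    have c1: "continuous_on {0<..} (\<lambda>u. f (u powr (1 / p)))"
      by (rule continuous_on_compose2[OF fcont cpw1]) auto
    have "continuous_on {0<..} (\<lambda>u. Phi (q p) (f (u powr (1 / p))))"
      by (rule continuous_on_compose2[OF Phi_cont c1]) (use f_pos in auto)
    then have "continuous_on {0<..} (fpq f p (q p))" unfolding fpq_Phi .
    then have "convex_on {0<..} (fpq f p (q p))" by (intro midconv_cont_convex mid)
    then show ?thesis using Rp_pos[OF pp] by simp
  qed
  show ?thesis using fcont conv by blast
qed

end
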